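(* Let $h:\mathbb{R}\to\mathbb{R}$ be $h(x):=\big(\frac{\sin(\pi x)}{\pi x}\big)^2$ (with $h(0)=1$), and let $r\ge1$. Then, considering the following functions of $x$ on the interval $[0,1]$: (i) $h(x)+h(x-1)$ has a global minimum at $x=\tfrac12$; (ii) for every $m=1,2,3,\dots$, $h(x+m)+h(x-(m+1))$ has a global maximum at $x=\tfrac12$; (iii) $h(x)+h(x-1)-\big(h(x)^r+h(x-1)^r\big)^{1/r}$ has a global maximum at $x=\tfrac12$; (iv) for every $m=1,2,3,\dots$, $\big(h(x+m)+h(x-(m+1))\big)^r-h(x+m)^r-h(x-(m+1))^r$ has a global maximum at $x=\tfrac12$.
   Context: $h$ is understood as its continuous extension at $x=0$, i.e. $h(0)=1$. *)

theory Defs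
  imports "HOL-Analysis.Analysis"
begin

definition h :: "real \<Rightarrow> real" where
  "h x = (if x = 0 then 1 else (sin (pi * x) / (pi * x))^2)"

end

theory Submission
  imports Defs
begin


lemma Qlem:
  fixes th w :: real
  assumes th: "0 < th" "th \<le> 1" and w: "0 \<le> w"
  shows "1 - exp (-(th*w)) \<le> (1 - exp (-w)) * exp ((th-1) * ln (1 + exp (-w)))"
proof -
  define Z where "Z = exp (-w)"
  have Z0: "0 < Z" and Z1: "Z \<le> 1" using w by (auto simp: Z_def)
  define L where "L = ln (1 + Z)"
  have L0: "0 \<le> L" using Z0 by (simp add: L_def)
  have LZ: "L \<le> Z" unfolding L_def using Z0 by (simp add: ln_add_one_self_le_self)
  have wZ: "1 - Z \<le> w" unfolding Z_def using exp_ge_add_one_self[of "-w"] by simp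
  define f where "f = (\<lambda>p. (1 - Z) * exp ((p-1) * L) - 1 + exp (-(p*w)))"
  have "f 1 \<le> f th"
  proof (rule DERIV_nonpos_imp_nonincreasing[OF th(2)])
    fix p assume p: "th \<le> p" "p \<le> 1"
    let ?D = "(1 - Z) * (exp ((p-1) * L) * L) - w * exp (-(p*w))"
    have "DERIV f p :> ?D"
      unfolding f_def by (auto intro!: derivative_eq_intros)
    moreover have "?D \<le> 0"
    proof -
      have e1: "exp ((p-1) * L) \<le> 1" using p L0 by (simp add: mult_nonpos_nonneg)
      have "(1 - Z) * (exp ((p-1) * L) * L) \<le> (1 - Z) * (1 * L)"
        using e1 L0 Z1 by (intro mult_left_mono mult_right_mono) auto
      also have "\<dots> \<le> (1 - Z) * Z" using LZ Z1 by (intro mult_left_mono) auto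
      finally have a: "(1 - Z) * (exp ((p-1) * L) * L) \<le> (1 - Z) * Z" .
      have "Z \<le> exp (-(p*w))" unfolding Z_def using p w th
        by (simp add: mult_left_le_one_le)
      then have "(1 - Z) * Z \<le> w * exp (-(p*w))"
        using wZ Z0 w by (intro mult_mono) auto
      with a show ?thesis by linarith
    qed
    ultimately show "\<exists>y. DERIV f p :> y \<and> y \<le> 0" by blast
  qed
  moreover have "f 1 = 0" by (simp add: f_def Z_def)
  ultimately show ?thesis by (simp add: f_def Z_def L_def)
qed

lemma Elem:
  fixes r y :: real
  assumes r: "1 \<le> r" and y: "0 \<le> y"
  shows "exp y + exp (-y) - (exp (r*y) + exp (-(r*y))) powr (1/r) \<le> 2 - 2 powr (1/r)"
proof -
  define th where "th = 1/r"
  have th: "0 < th" "th \<le> 1" "th * r = 1" using r by (auto simp: th_def)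
  define g where "g = (\<lambda>z. exp z * exp (th * ln (1 + exp (-(2*r*z)))) - exp z - exp (-z))"
  have "g 0 \<le> g y"
  proof (rule DERIV_nonneg_imp_nondecreasing[OF y])
    fix z assume z: "0 \<le> z" "z \<le> y"
    define Z where "Z = exp (-(2*r*z))"
    have Z0: "0 < Z" by (simp add: Z_def)
    define E where "E = exp (th * ln (1 + Z))"
    let ?D = "exp z * ((1 - Z) * exp ((th-1) * ln (1 + Z)) - 1 + exp (-(th*(2*r*z))))"
    have "DERIV g z :> exp z * E + exp z * (E * (th * (Z * (- (2*r)) / (1 + Z)))) - exp z + exp (-z)"
      unfolding g_def E_def Z_def
      by (rule derivative_eq_intros refl | simp add: add_pos_pos)+
    moreover have "exp z * E + exp z * (E * (th * (Z * (- (2*r)) / (1 + Z)))) - exp z + exp (-z) = ?D"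
    proof -
      have "th * (Z * (- (2*r)) / (1 + Z)) = - 2 * Z / (1 + Z)" using th(3)
        by (simp add: field_simps)
      moreover have "exp ((th-1) * ln (1 + Z)) = E / (1 + Z)"
        using Z0 by (simp add: E_def algebra_simps exp_diff)
      moreover have "exp (-(th*(2*r*z))) = exp (-z) / exp z"
      proof -
        have "th*(2*r*z) = 2*z" using th(3) by (simp add: algebra_simps)
        then show ?thesis by (simp add: exp_minus field_simps flip: exp_add)
      qed
      ultimately show ?thesis using Z0 by (simp add: field_simps)
    qed
    moreover have "0 \<le> ?D"
    proof -
      have "1 - exp (-(th*(2*r*z))) \<le> (1 - Z) * exp ((th-1) * ln (1 + Z))"
        unfolding Z_def using Qlem[OF th(1) th(2), of "2*r*z"] r z by simp
      then show ?thesis by simp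
    qed
    ultimately show "\<exists>D. DERIV g z :> D \<and> 0 \<le> D" by auto
  qed
  moreover have "g 0 = 2 powr th - 2"
    by (simp add: g_def powr_def)
  moreover have "g y = (exp (r*y) + exp (-(r*y))) powr th - exp y - exp (-y)"
  proof -
    have "exp (r*y) + exp (-(r*y)) = exp (r*y) * (1 + exp (-(2*r*y)))"
      by (simp add: distrib_left flip: exp_add)
    moreover have p: "0 < 1 + exp (-(2*r*y))" by (simp add: add_pos_pos)
    ultimately have "ln (exp (r*y) + exp (-(r*y))) = r*y + ln (1 + exp (-(2*r*y)))"
      by (simp add: ln_mult)
    then have "(exp (r*y) + exp (-(r*y))) powr th = exp (th*(r*y)) * exp (th * ln (1 + exp (-(2*r*y))))"
      using add_pos_pos[OF exp_gt_zero exp_gt_zero, of "r*y" "-(r*y)"]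
      by (simp add: powr_def distrib_left flip: exp_add)
    moreover have "th*(r*y) = y" using th(3) by (simp add: algebra_simps)
    ultimately show ?thesis by (simp add: g_def)
  qed
  ultimately show ?thesis by (simp add: th_def)
qed

lemma Llem0:
  fixes a b r :: real
  assumes r: "1 \<le> r" and b: "0 < b" and ab: "b \<le> a"
  shows "a + b - (a powr r + b powr r) powr (1/r) \<le> (2 - 2 powr (1/r)) * sqrt (a*b)"
proof -
  have a: "0 < a" using b ab by simp
  define m where "m = sqrt (a*b)"
  define y where "y = ln (a/b) / 2"
  have m0: "0 < m" using a b by (simp add: m_def)
  have y0: "0 \<le> y" using a b ab by (simp add: y_def)
  have ey: "exp y = sqrt (a/b)"
    using a b by (simp add: y_def powr_half_sqrt[symmetric] powr_def)
  have ea: "a = m * exp y"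
    using a b by (simp add: m_def ey real_sqrt_mult[symmetric])
  have eb: "b = m * exp (-y)"
    using a b by (simp add: m_def ey exp_minus real_sqrt_divide field_simps real_sqrt_mult)
  have "a powr r + b powr r = m powr r * (exp (r*y) + exp (-(r*y)))"
    unfolding ea eb using m0 by (simp add: powr_mult exp_powr_real distrib_left mult.commute)
  then have "(a powr r + b powr r) powr (1/r) = m * (exp (r*y) + exp (-(r*y))) powr (1/r)"
    using m0 r by (simp add: powr_mult powr_powr)
  then have "a + b - (a powr r + b powr r) powr (1/r)
      = m * (exp y + exp (-y) - (exp (r*y) + exp (-(r*y))) powr (1/r))"
  proof -
    have "a + b = m * (exp y + exp (-y))" using ea eb by (simp add: algebra_simps)
    with \<open>(a powr r + b powr r) powr (1/r) = _\<close> show ?thesis by (simp add: algebra_simps)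
  qed
  also have "\<dots> \<le> m * (2 - 2 powr (1/r))"
    using Elem[OF r y0] m0 by (intro mult_left_mono) auto
  finally show ?thesis by (simp add: m_def mult.commute)
qed

lemma Llem:
  fixes a b r :: real
  assumes r: "1 \<le> r" and a: "0 \<le> a" and b: "0 \<le> b"
  shows "a + b - (a powr r + b powr r) powr (1/r) \<le> (2 - 2 powr (1/r)) * sqrt (a*b)"
proof -
  have c: "2 powr (1/r) \<le> 2 powr 1" using r by (intro powr_mono) auto
  then have c0: "0 \<le> (2 - 2 powr (1/r)) * sqrt (a*b)" using a b by simp
  show ?thesis
  proof (cases "a = 0 \<or> b = 0")
    case True
    then show ?thesis using a b r c0 by (auto simp: powr_powr)
  next
    case False
    then have "0 < a" "0 < b" using a b by auto
    then show ?thesis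
    proof (cases "b \<le> a")
      case True then show ?thesis using Llem0[OF r \<open>0<b\<close>] by simp
    next
      case False then show ?thesis using Llem0[OF r \<open>0<a\<close>, of b]
        by (simp add: add.commute mult.commute)
    qed
  qed
qed

lemma sin_lower: fixes y :: real assumes "y \<ge> 0" shows "y - y^3/6 \<le> sin y"
proof -
  obtain t where t: "sin y = (\<Sum>m<3. sin_coeff m * y ^ m) + (sin (t + 1/2 * real 3 * pi) / fact 3) * y ^ 3"
    using Maclaurin_sin_expansion by blast
  have "t + 1/2 * real 3 * pi = (t + pi/2) + pi" by simp
  then have s: "sin (t + 1/2 * real 3 * pi) = - cos t"
    by (simp only: sin_periodic_pi) (simp add: sin_add)
  have "(\<Sum>m<3. sin_coeff m * y ^ m) = y" by (simp add: sin_coeff_def eval_nat_numeral)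
  with t s have "sin y = y - cos t * y^3 / 6" by (simp add: fact_numeral)
  moreover have "cos t * y^3 \<le> 1 * y^3" using assms by (intro mult_right_mono) auto
  ultimately show ?thesis by (simp add: divide_right_mono)
qed

lemma cos_lower: fixes y :: real shows "1 - y^2/2 + y^4/24 - y^6/720 \<le> cos y"
proof -
  obtain t where t: "cos y = (\<Sum>m<6. cos_coeff m * y ^ m) + (cos (t + 1/2 * real 6 * pi) / fact 6) * y ^ 6"
    using Maclaurin_cos_expansion by blast
  have "t + 1/2 * real 6 * pi = (t + pi) + 2*pi" by simp
  then have s: "cos (t + 1/2 * real 6 * pi) = - cos t"
    by (simp only: cos_periodic cos_periodic_pi)
  have "(\<Sum>m<6. cos_coeff m * y ^ m) = 1 - y^2/2 + y^4/24"
  proof -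
    have e: "(\<Sum>m<6. g m) = g 0 + g 1 + g 2 + g 3 + g 4 + g 5" for g :: "nat \<Rightarrow> real"
      by (simp add: eval_nat_numeral)
    show ?thesis unfolding e by (simp add: cos_coeff_def fact_numeral)
  qed
  with t s have "cos y = 1 - y^2/2 + y^4/24 - cos t * y^6 / 720" by (simp add: fact_numeral)
  moreover have "cos t * y^6 \<le> 1 * y^6" by (intro mult_right_mono) auto
  ultimately show ?thesis by (simp add: divide_right_mono)
qed

lemma pi_lo: "314159/100000 \<le> pi" using pi_approx by simp
lemma pi_hi: "pi \<le> 31416/10000" using pi_approx by simp
lemma pi2_hi: "pi^2 \<le> 987/100"
proof -
  have a: "pi^2 \<le> (31416/10000)^2" by (rule power_mono[OF pi_hi]) simp
  have b: "(31416/10000::real)^2 \<le> 987/100" by (simp add: power_divide)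
  from a b show ?thesis by linarith
qed
lemma pi2_lo: "9 \<le> pi^2"
proof -
  have "(3::real)^2 \<le> pi^2" using pi_gt3 by (intro power_mono) auto
  then show ?thesis by simp
qed
lemma pi3_hi: "pi^3 \<le> 3101/100"
proof -
  have a: "pi^3 \<le> (31416/10000)^3" by (rule power_mono[OF pi_hi]) simp
  have b: "(31416/10000::real)^3 \<le> 3101/100" by (simp add: power_divide)
  from a b show ?thesis by linarith
qed
lemma pi4_lo: "97 \<le> pi^4"
proof -
  have a: "(314159/100000)^4 \<le> pi^4" by (rule power_mono[OF pi_lo]) simp
  have b: "97 \<le> (314159/100000::real)^4" by (simp add: power_divide)
  from a b show ?thesis by linarith
qed
lemma pi6_hi: "pi^6 \<le> 962"
proof -
  have a: "pi^6 \<le> (31416/10000)^6" by (rule power_mono[OF pi_hi]) simp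
  have b: "(31416/10000::real)^6 \<le> 962" by (simp add: power_divide)
  from a b show ?thesis by linarith
qed

lemma J0:
  fixes x :: real assumes x: "0 \<le> x" "x \<le> 1/2"
  shows "sin (pi*x)^2 \<le> 4*x*(1-x)"
proof (cases "x \<le> 1/4")
  case True
  have s0: "0 \<le> sin (pi*x)" using x by (intro sin_ge_zero) auto
  have "sin (pi*x) \<le> pi*x" using x by (intro sin_x_le_x) auto
  then have "sin (pi*x)^2 \<le> (pi*x)^2" using s0 by (intro power_mono) auto
  also have "\<dots> = x * (pi^2 * x)" by (simp add: power2_eq_square)
  also have "\<dots> \<le> x * (4*(1-x))"
  proof (intro mult_left_mono)
    have "pi^2 * x \<le> 987/100 * x" using pi2_hi x by (intro mult_right_mono) auto
    moreover have "4*(1-x) = 4 - 4*x" by simp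
    ultimately show "pi^2 * x \<le> 4*(1-x)" using True by linarith
  qed (use x in auto)
  finally show ?thesis by (simp add: algebra_simps)
next
  case False
  define t where "t = 1/2 - x"
  have t: "0 \<le> t" "t \<le> 1/4" using x False by (auto simp: t_def)
  have "sin (pi*x) = cos (pi*t)" by (simp add: t_def cos_sin_eq right_diff_distrib)
  then have sc: "sin (pi*x)^2 = 1 - sin (pi*t)^2" by (simp add: cos_squared_eq)
  have sl: "pi*t - (pi*t)^3/6 \<le> sin (pi*t)" using t by (intro sin_lower) auto
  have f1: "314159/100000 * t \<le> pi*t" using pi_lo t by (intro mult_right_mono) auto
  have f2: "pi^3 * t^3 \<le> 3101/100 * t^3" using pi3_hi t by (intro mult_right_mono) auto
  have f3: "t^3 \<le> t/16"
  proof -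
    have "t^2 \<le> (1/4)^2" using t by (intro power_mono) auto
    then have "t * t^2 \<le> t * (1/4)^2" using t by (intro mult_left_mono) auto
    then show ?thesis by (simp add: power3_eq_cube power2_eq_square)
  qed
  have "(pi*t)^3 = pi^3 * t^3" by (simp add: power_mult_distrib)
  then have "2*t \<le> sin (pi*t)" using sl f1 f2 f3 t by linarith
  then have "(2*t)^2 \<le> sin (pi*t)^2" using t by (intro power_mono) auto
  moreover have "4*x*(1-x) = 1 - (2*t)^2" by (simp add: t_def power2_eq_square algebra_simps)
  ultimately show ?thesis using sc by linarith
qed

lemma Jlem:
  fixes x :: real assumes x: "0 \<le> x" "x \<le> 1"
  shows "sin (pi*x)^2 \<le> 4*x*(1-x)"
proof (cases "x \<le> 1/2")
  case True then show ?thesis using J0 x by auto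
next
  case False
  have "sin (pi*(1-x))^2 \<le> 4*(1-x)*(1-(1-x))" using J0[of "1-x"] x False by auto
  moreover have "sin (pi*(1-x)) = sin (pi*x)" by (simp add: right_diff_distrib)
  ultimately show ?thesis by (simp add: algebra_simps)
qed

lemma C0:
  fixes x :: real assumes x: "0 \<le> x" "x \<le> 1/2"
  shows "4*x*(1-x)*(3/4+x-x^2) \<le> sin (pi*x)"
proof (cases "x \<le> 1/5")
  case True
  have sl: "pi*x - (pi*x)^3/6 \<le> sin (pi*x)" using x by (intro sin_lower) auto
  have f1: "314159/100000 * x \<le> pi*x" using pi_lo x by (intro mult_right_mono) auto
  have f2: "pi^3 * x^3 \<le> 3101/100 * x^3" using pi3_hi x by (intro mult_right_mono) auto
  have f3: "x^4 \<le> x^3/5"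
  proof -
    have "x * x^3 \<le> (1/5) * x^3" using x True by (intro mult_right_mono) auto
    then show ?thesis by (simp add: power_Suc[symmetric] del: power_Suc)
  qed
  have f4: "0 \<le> x * (x - 1/4)^2" using x by simp
  have e4: "x * (x - 1/4)^2 = x^3 - x^2/2 + x/16" by (simp add: power2_eq_square power3_eq_cube algebra_simps)
  have e1: "(pi*x)^3 = pi^3 * x^3" by (simp add: power_mult_distrib)
  have e2: "4*x*(1-x)*(3/4+x-x^2) = 3*x + x^2 - 8*x^3 + 4*x^4"
    by (simp add: power2_eq_square power3_eq_cube power4_eq_xxxx algebra_simps)
  have x2: "0 \<le> x^2" "0 \<le> x^3" using x by auto
  show ?thesis using sl f1 f2 f3 f4 e4 e1 e2 x2 x by linarith
next
  case False
  define t where "t = 1/2 - x"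
  have t: "0 \<le> t" "t \<le> 3/10" using x False by (auto simp: t_def)
  have "sin (pi*x) = cos (pi*t)" by (simp add: t_def cos_sin_eq right_diff_distrib)
  moreover have cl: "1 - (pi*t)^2/2 + (pi*t)^4/24 - (pi*t)^6/720 \<le> cos (pi*t)" by (rule cos_lower)
  moreover have "(pi*t)^2 = pi^2*t^2" "(pi*t)^4 = pi^4*t^4" "(pi*t)^6 = pi^6*t^6"
    by (simp_all add: power_mult_distrib)
  moreover have "pi^2*t^2 \<le> 987/100 * t^2" using pi2_hi by (intro mult_right_mono) auto
  moreover have "97 * t^4 \<le> pi^4*t^4" using pi4_lo by (intro mult_right_mono) auto
  moreover have "pi^6*t^6 \<le> 962 * t^6" using pi6_hi by (intro mult_right_mono) auto
  moreover have "t^6 \<le> 81/10000 * t^2"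
  proof -
    have "t^4 \<le> (3/10)^4" using t by (intro power_mono) auto
    then have "t^2 * t^4 \<le> t^2 * (3/10)^4" by (intro mult_left_mono) auto
    then show ?thesis by (simp add: power_add[symmetric] mult.commute power_divide)
  qed
  moreover have "4*x*(1-x)*(3/4+x-x^2) = 1 - 5*t^2 + 4*t^4"
    unfolding t_def power4_eq_xxxx power2_eq_square by algebra
  moreover have "0 \<le> t^4" "0 \<le> t^2" by simp_all
  ultimately show ?thesis by linarith
qed

lemma K0:
  fixes x :: real assumes x: "0 \<le> x" "x \<le> 1/2"
  shows "8*x^2*(1-x)^2 \<le> sin (pi*x)^2 * (x^2 + (1-x)^2)"
proof -
  define w where "w = x*(1-x)"
  have w0: "0 \<le> w" using x by (simp add: w_def)
  have "1/4 - w = (x - 1/2)^2" by (simp add: w_def power2_eq_square algebra_simps)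
  then have w1: "w \<le> 1/4" by (metis diff_ge_0_iff_ge zero_le_power2)
  have R: "4*x*(1-x)*(3/4+x-x^2) = 4*w*(3/4+w)" by (simp add: w_def power2_eq_square algebra_simps)
  have R0: "0 \<le> 4*w*(3/4+w)" using w0 by simp
  have "4*w*(3/4+w) \<le> sin (pi*x)" using C0[OF x] R by simp
  then have sq: "(4*w*(3/4+w))^2 \<le> sin (pi*x)^2" using R0 by (intro power_mono) auto
  have Q: "x^2 + (1-x)^2 = 1 - 2*w" by (simp add: w_def power2_eq_square algebra_simps)
  have Q0: "0 \<le> 1 - 2*w" using w1 by simp
  have "(4*w*(3/4+w))^2 * (1 - 2*w) \<le> sin (pi*x)^2 * (1 - 2*w)"
    using sq Q0 by (intro mult_right_mono) auto
  moreover have "(4*w*(3/4+w))^2 * (1 - 2*w) - 8*w^2 = 8*w^2*(1/4-w)*(4*w^2+5*w+1/2)"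
    by (simp add: power2_eq_square algebra_simps)
  moreover have "0 \<le> 8*w^2*(1/4-w)*(4*w^2+5*w+1/2)" using w0 w1 by simp
  moreover have "8*x^2*(1-x)^2 = 8*w^2" by (simp add: w_def power_mult_distrib)
  ultimately show ?thesis unfolding Q by linarith
qed

lemma K1:
  fixes x :: real assumes x: "0 \<le> x" "x \<le> 1"
  shows "8*x^2*(1-x)^2 \<le> sin (pi*x)^2 * (x^2 + (1-x)^2)"
proof (cases "x \<le> 1/2")
  case True then show ?thesis using K0 x by auto
next
  case False
  have "8*(1-x)^2*(1-(1-x))^2 \<le> sin (pi*(1-x))^2 * ((1-x)^2 + (1-(1-x))^2)"
    using K0[of "1-x"] x False by auto
  moreover have "sin (pi*(1-x)) = sin (pi*x)" by (simp add: right_diff_distrib)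
  ultimately show ?thesis by (simp add: algebra_simps)
qed

lemma h_nonneg: "0 \<le> h x" by (simp add: h_def)

lemma h_eq: "x \<noteq> 0 \<Longrightarrow> h x = sin (pi*x)^2 / (pi^2 * x^2)"
  by (simp add: h_def power_divide power_mult_distrib)

lemma sin_shift_plus: "sin (pi*(x + real n))^2 = sin (pi*x)^2"
proof -
  have "sin (pi*(x + real n)) = sin (pi*x) * (-1)^n"
    by (simp add: distrib_left sin_add mult.commute)
  then show ?thesis by (simp add: power_mult_distrib power_even_eq[symmetric] flip: power_mult)
qed

lemma sin_shift_minus: "sin (pi*(x - real n))^2 = sin (pi*x)^2"
proof -
  have "sin (pi*(x - real n)) = sin (pi*x) * (-1)^n"
    by (simp add: right_diff_distrib sin_diff mult.commute)
  then show ?thesis by (simp add: power_mult_distrib power_even_eq[symmetric] flip: power_mult)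
qed

lemma h_half: "h (1/2) = 4/pi^2" "h (1/2 - 1) = 4/pi^2"
  by (simp_all add: h_def power_divide)

lemma h_halfm: "h (1/2 + real m) = 1/(pi^2*(1/2 + real m)^2)"
  "h (1/2 - (real m + 1)) = 1/(pi^2*(1/2 + real m)^2)"
proof -
  have p: "1/2 + real m \<noteq> 0" by (simp add: add_pos_nonneg)
  have "sin (pi*(1/2 + real m))^2 = 1" using sin_shift_plus[of "1/2" m] by simp
  then show "h (1/2 + real m) = 1/(pi^2*(1/2 + real m)^2)" using h_eq[OF p] by simp
  have q: "1/2 - (real m + 1) \<noteq> 0" by simp
  have "sin (pi*(1/2 - real (Suc m)))^2 = 1" using sin_shift_minus[of "1/2" "Suc m"] by simp
  then have "sin (pi*(1/2 - (real m + 1)))^2 = 1" by simp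
  moreover have "(1/2 - (real m + 1))^2 = (1/2 + real m)^2" by (simp add: power2_eq_square algebra_simps)
  ultimately show "h (1/2 - (real m + 1)) = 1/(pi^2*(1/2 + real m)^2)" using h_eq[OF q] by simp
qed

lemma partI:
  fixes x :: real assumes x: "0 \<le> x" "x \<le> 1"
  shows "h (1/2) + h (1/2 - 1) \<le> h x + h (x - 1)"
proof -
  have L: "h (1/2) + h (1/2 - 1) = 8/pi^2" using h_half by simp
  have p8: "8/pi^2 \<le> 1" using pi2_lo by simp
  consider "x = 0" | "x = 1" | "0 < x" "x < 1" using x by linarith
  then show ?thesis
  proof cases
    case 1 then show ?thesis using L p8 h_nonneg[of "-1"] by (simp add: h_def)
  next
    case 2 then show ?thesis using L p8 by (simp add: h_def)
  next
    case 3
    define s where "s = sin (pi*x)^2"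
    have hx: "h x = s/(pi^2*x^2)" using 3 h_eq[of x] by (simp add: s_def)
    have "sin (pi*(x - real 1))^2 = s" unfolding s_def by (rule sin_shift_minus)
    then have hx1: "h (x-1) = s/(pi^2*(1-x)^2)" using 3 h_eq[of "x-1"]
      by (simp add: power2_commute)
    have d: "0 < x^2*(1-x)^2" using 3 by simp
    have "8/pi^2 = (8*x^2*(1-x)^2)/(x^2*(1-x)^2) / pi^2" using 3 by simp
    also have "\<dots> \<le> (s*(x^2+(1-x)^2))/(x^2*(1-x)^2) / pi^2"
      using K1[OF x] d by (intro divide_right_mono) (auto simp: s_def)
    also have "\<dots> = h x + h (x - 1)" unfolding hx hx1 using 3
      by (simp add: field_simps)
    finally show ?thesis using L by simp
  qed
qed

lemma partII:
  fixes x :: real and m :: nat assumes x: "0 \<le> x" "x \<le> 1" and m: "1 \<le> m"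
  shows "h (x + real m) + h (x - (real m + 1)) \<le> h (1/2 + real m) + h (1/2 - (real m + 1))"
proof -
  define s where "s = sin (pi*x)^2"
  define M where "M = 1/2 + real m"
  define P where "P = x + real m"
  define Q where "Q = x - (real m + 1)"
  have M: "3/2 \<le> M" using m by (simp add: M_def)
  have P0: "0 < P" using x m by (simp add: P_def)
  have Q0: "Q < 0" using x m by (simp add: Q_def)
  have hP: "h P = s/(pi^2*P^2)" using P0 h_eq[of P] sin_shift_plus[of x m] by (simp add: s_def P_def)
  have "sin (pi*(x - real (Suc m)))^2 = s" unfolding s_def by (rule sin_shift_minus)
  then have "sin (pi*Q)^2 = s" by (simp add: Q_def add.commute)
  then have hQ: "h Q = s/(pi^2*Q^2)" using Q0 h_eq[of Q] by simp
  have R: "h (1/2 + real m) + h (1/2 - (real m + 1)) = 2/(pi^2*M^2)"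
    unfolding h_halfm M_def by simp
  define J where "J = 4*x*(1-x)"
  have sJ: "s \<le> J" using Jlem[OF x] by (simp add: s_def J_def)
  define T where "T = (x - 1/2)^2"
  have T0: "0 \<le> T" by (simp add: T_def)
  have poly: "2*P^2*Q^2 - J*(P^2+Q^2)*M^2 = 2*T*(4*M^4 - 3*M^2 + 4*M^2*T + T)"
    unfolding P_def Q_def J_def T_def M_def power4_eq_xxxx power2_eq_square by algebra
  have "0 \<le> 4*M^4 - 3*M^2"
  proof -
    have "(3/2)^2 \<le> M^2" using M by (intro power_mono) auto
    then have "9/4 \<le> M^2" by (simp add: power_divide)
    then have "3 * M^2 \<le> 4*M^2 * M^2" by (intro mult_right_mono) auto
    then show ?thesis by (simp add: power4_eq_xxxx power2_eq_square)
  qed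
  then have "0 \<le> 2*T*(4*M^4 - 3*M^2 + 4*M^2*T + T)" using T0 by simp
  then have pl: "J*(P^2+Q^2)*M^2 \<le> 2*P^2*Q^2" using poly by linarith
  have pos: "0 < P^2*Q^2*M^2" using P0 Q0 M by simp
  have "h P + h Q \<le> J/(pi^2*P^2) + J/(pi^2*Q^2)"
    unfolding hP hQ using sJ P0 Q0 by (intro add_mono divide_right_mono) auto
  also have "\<dots> = (J*(P^2+Q^2)*M^2)/(P^2*Q^2*M^2) / pi^2"
    using P0 Q0 M by (simp add: field_simps)
  also have "\<dots> \<le> (2*P^2*Q^2)/(P^2*Q^2*M^2) / pi^2"
    using pl pos by (intro divide_right_mono) auto
  also have "\<dots> = 2/(pi^2*M^2)" using P0 Q0 M by (simp add: field_simps)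
  finally show ?thesis using R by (simp add: P_def Q_def)
qed

lemma prod_bound:
  fixes x :: real assumes x: "0 \<le> x" "x \<le> 1"
  shows "sqrt (h x * h (x - 1)) \<le> 4/pi^2"
proof -
  have "h x * h (x - 1) \<le> (4/pi^2)^2"
  proof -
    consider "x = 0" | "x = 1" | "0 < x" "x < 1" using x by linarith
    then show ?thesis
    proof cases
      case 1 then show ?thesis by (simp add: h_def)
    next
      case 2 then show ?thesis by (simp add: h_def)
    next
      case 3
      define s where "s = sin (pi*x)^2"
      have hx: "h x = s/(pi^2*x^2)" using 3 h_eq[of x] by (simp add: s_def)
      have "sin (pi*(x - real 1))^2 = s" unfolding s_def by (rule sin_shift_minus)
      then have hx1: "h (x-1) = s/(pi^2*(1-x)^2)" using 3 h_eq[of "x-1"]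
        by (simp add: power2_commute)
      have w: "0 < x*(1-x)" using 3 by simp
      have s0: "0 \<le> s" by (simp add: s_def)
      have "h x * h (x - 1) = (s/(x*(1-x))/pi^2)^2" unfolding hx hx1 using 3
        by (simp add: field_simps power2_eq_square)
      also have "\<dots> \<le> (4/pi^2)^2"
      proof (intro power_mono divide_right_mono)
        show "s/(x*(1-x)) \<le> 4" using Jlem[OF x] w by (simp add: s_def pos_divide_le_eq)
      qed (use s0 w in auto)
      finally show ?thesis .
    qed
  qed
  then have "sqrt (h x * h (x - 1)) \<le> sqrt ((4/pi^2)^2)" by (rule real_sqrt_le_mono)
  then show ?thesis by simp
qed

lemma partIII:
  fixes x r :: real assumes x: "0 \<le> x" "x \<le> 1" and r: "1 \<le> r"
  shows "h x + h (x - 1) - (h x powr r + h (x - 1) powr r) powr (1/r)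
          \<le> h (1/2) + h (1/2 - 1) - (h (1/2) powr r + h (1/2 - 1) powr r) powr (1/r)"
proof -
  define k where "k = 4/pi^2"
  have k0: "0 < k" by (simp add: k_def)
  have c: "2 powr (1/r) \<le> 2 powr 1" using r by (intro powr_mono) auto
  have "(k powr r + k powr r) powr (1/r) = 2 powr (1/r) * k"
    using k0 r by (simp add: powr_mult powr_powr flip: mult_2)
  then have R: "h (1/2) + h (1/2 - 1) - (h (1/2) powr r + h (1/2 - 1) powr r) powr (1/r)
      = (2 - 2 powr (1/r)) * k"
    unfolding h_half k_def[symmetric] by (simp add: algebra_simps)
  have "h x + h (x - 1) - (h x powr r + h (x - 1) powr r) powr (1/r)
      \<le> (2 - 2 powr (1/r)) * sqrt (h x * h (x - 1))"
    by (rule Llem[OF r h_nonneg h_nonneg])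
  also have "\<dots> \<le> (2 - 2 powr (1/r)) * k"
    using prod_bound[OF x] c by (intro mult_left_mono) (auto simp: k_def)
  finally show ?thesis using R by simp
qed

lemma convex2:
  fixes A B r :: real assumes r: "1 \<le> r" and A: "0 \<le> A" and B: "0 \<le> B"
  shows "2 * ((A + B)/2) powr r \<le> A powr r + B powr r"
proof (cases "A = 0 \<or> B = 0")
  case True
  have "2 \<le> 2 powr r" using r by (metis powr_mono powr_one_eq_one powr_one_gt_zero_iff one_le_numeral zero_le_numeral powr_one)
  then have "2 * (A + B) powr r \<le> 2 powr r * (A + B) powr r" by (intro mult_right_mono) auto
  then have "2 * ((A + B)/2) powr r \<le> (A + B) powr r"
    by (simp add: powr_divide field_simps)
  then show ?thesis using True by auto
next
  case False
  then have "A \<in> {0<..}" "B \<in> {0<..}" using A B by auto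
  from convex_onD[OF powr_convex[OF r], of "1/2", OF _ _ this]
  have "((1 - 1/2) * A + 1/2 * B) powr r \<le> (1 - 1/2) * A powr r + 1/2 * B powr r" by simp
  moreover have "(1 - 1/2) * A + 1/2 * B = (A+B)/2" by simp
  ultimately have "((A+B)/2) powr r \<le> (1 - 1/2) * A powr r + 1/2 * B powr r" by (simp add: add_divide_distrib)
  then show ?thesis by simp
qed

lemma partIV:
  fixes x r :: real and m :: nat assumes x: "0 \<le> x" "x \<le> 1" and m: "1 \<le> m" and r: "1 \<le> r"
  shows "(h (x + real m) + h (x - (real m + 1))) powr r - h (x + real m) powr r
            - h (x - (real m + 1)) powr r
          \<le> (h (1/2 + real m) + h (1/2 - (real m + 1))) powr r - h (1/2 + real m) powr r
            - h (1/2 - (real m + 1)) powr r"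
proof -
  define A where "A = h (x + real m)"
  define B where "B = h (x - (real m + 1))"
  define k where "k = 1/(pi^2*(1/2 + real m)^2)"
  have k0: "0 \<le> k" by (simp add: k_def)
  have AB: "A + B \<le> 2*k" using partII[OF x m] unfolding A_def B_def h_halfm k_def by simp
  have A0: "0 \<le> A" "0 \<le> B" by (simp_all add: A_def B_def h_nonneg)
  have p2: "2 \<le> 2 powr r" using r by (metis powr_mono powr_one_eq_one powr_one_gt_zero_iff one_le_numeral zero_le_numeral powr_one)
  define c where "c = 1 - 2 / 2 powr r"
  have c0: "0 \<le> c" using p2 by (simp add: c_def)
  have "(A+B) powr r - A powr r - B powr r \<le> (A+B) powr r - 2 * ((A+B)/2) powr r"
    using convex2[OF r A0] by simp
  also have "\<dots> = c * (A+B) powr r" by (simp add: c_def powr_divide field_simps)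
  also have "\<dots> \<le> c * (2*k) powr r"
    using AB A0 c0 r by (intro mult_left_mono powr_mono2) auto
  also have "\<dots> = (2*k) powr r - k powr r - k powr r"
    using p2 by (simp add: c_def powr_mult field_simps)
  finally show ?thesis unfolding A_def B_def h_halfm k_def by simp
qed


theorem lemma5:
  fixes r :: real
  assumes "r \<ge> 1"
  shows "(\<forall>x\<in>{0..1}. h (1/2) + h (1/2 - 1) \<le> h x + h (x - 1))
    \<and> (\<forall>m::nat. m \<ge> 1 \<longrightarrow> (\<forall>x\<in>{0..1}.
          h (x + real m) + h (x - (real m + 1)) \<le> h (1/2 + real m) + h (1/2 - (real m + 1))))
    \<and> (\<forall>x\<in>{0..1}.
          h x + h (x - 1) - (h x powr r + h (x - 1) powr r) powr (1/r)
          \<le> h (1/2) + h (1/2 - 1) - (h (1/2) powr r + h (1/2 - 1) powr r) powr (1/r))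
    \<and> (\<forall>m::nat. m \<ge> 1 \<longrightarrow> (\<forall>x\<in>{0..1}.
          (h (x + real m) + h (x - (real m + 1))) powr r - h (x + real m) powr r
            - h (x - (real m + 1)) powr r
          \<le> (h (1/2 + real m) + h (1/2 - (real m + 1))) powr r - h (1/2 + real m) powr r
            - h (1/2 - (real m + 1)) powr r))"
  proof (intro conjI allI impI ballI)
  show "\<And>x. x \<in> {0..1} \<Longrightarrow> h (1/2) + h (1/2 - 1) \<le> h x + h (x - 1)"
    using partI by auto
next
  fix m :: nat and x :: real assume "1 \<le> m" "x \<in> {0..1}"
  then show "h (x + real m) + h (x - (real m + 1)) \<le> h (1/2 + real m) + h (1/2 - (real m + 1))"
    using partII by auto
next
  fix x :: real assume "x \<in> {0..1}"
  then show "h x + h (x - 1) - (h x powr r + h (x - 1) powr r) powr (1/r)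
          \<le> h (1/2) + h (1/2 - 1) - (h (1/2) powr r + h (1/2 - 1) powr r) powr (1/r)"
    using partIII assms by auto
next
  fix m :: nat and x :: real assume "1 \<le> m" "x \<in> {0..1}"
  then show "(h (x + real m) + h (x - (real m + 1))) powr r - h (x + real m) powr r
            - h (x - (real m + 1)) powr r
          \<le> (h (1/2 + real m) + h (1/2 - (real m + 1))) powr r - h (1/2 + real m) powr r
            - h (1/2 - (real m + 1)) powr r"
    using partIV assms by auto
qed

end
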